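(* Let $p(x)$ be a distribution on $\mathbb{R}^n$, $f_\theta:\mathbb{R}^n\to\mathcal{S}^{d-1}$ an encoder, $\tau>0$ a temperature and $t^->0$. For a query $x$ define $$\pi^-_\theta(x^-\mid x)=\frac{e^{-t^-\|f_\theta(x)-f_\theta(x^-)\|_2^2}\,p(x^-)}{\int e^{-t^-\|f_\theta(x)-f_\theta(x')\|_2^2}\,p(x')\,dx'},$$ the mutual information $$I(X;X^-)=\mathbb{E}_{x\sim p(x)}\mathbb{E}_{x^-\sim\pi^-_\theta(\cdot\mid x)}\Big[\ln\frac{\pi^-_\theta(x^-\mid x)}{p(x^-)}\Big],$$ the contrastive repulsion loss $$\mathcal{L}_{\mathrm{CR}}=\mathbb{E}_{x\sim p(x)}\mathbb{E}_{x^-\sim\pi^-_\theta(\cdot\mid x)}\big[-c(f_\theta(x),f_\theta(x^-))\big]\quad\text{with } c(z_1,z_2)=-z_1^\top z_2/\tau,$$ and the uniformity loss $$\mathcal{L}_{\mathrm{uniform}}=\mathbb{E}_{x\sim p(x)}\Big[\ln\mathbb{E}_{x^-\sim p(x^-)}e^{f_\theta(x^-)^\top f_\theta(x)/\tau}\Big].$$ Then $$\mathcal{L}_{\mathrm{uniform}}+I(X;X^-)\ \geqslant\ \mathcal{L}_{\mathrm{CR}}.$$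
   Context: $\mathcal{L}_{\mathrm{uniform}}$ is the limit, as the number $M$ of negative samples tends to infinity, of the contribution of the negative samples to the standard contrastive (InfoNCE) loss $\mathbb{E}\big[-\ln\frac{e^{f_\theta(x)^\top f_\theta(x^+)/\tau}}{e^{f_\theta(x)^\top f_\theta(x^+)/\tau}+\sum_{i=1}^M e^{f_\theta(x_i^-)^\top f_\theta(x)/\tau}}\big]$ (after subtracting $\ln M$), where negatives $x_i^-$ are drawn i.i.d. from $p$ independently of the query $x$. *)

theory Defs
  imports "HOL-Analysis.Analysis"
begin

definition negZ :: "(real^'n::finite \<Rightarrow> real) \<Rightarrow> (real^'n \<Rightarrow> real^'d::finite) \<Rightarrow> real \<Rightarrow> real^'n \<Rightarrow> real"
  where "negZ p f tn x = (\<integral>x'. exp (- tn * (norm (f x - f x'))\<^sup>2) * p x' \<partial>lborel)"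

definition pi_neg :: "(real^'n::finite \<Rightarrow> real) \<Rightarrow> (real^'n \<Rightarrow> real^'d::finite) \<Rightarrow> real \<Rightarrow> real^'n \<Rightarrow> real^'n \<Rightarrow> real"
  where "pi_neg p f tn x xm = exp (- tn * (norm (f x - f xm))\<^sup>2) * p xm / negZ p f tn x"

definition mutual_info :: "(real^'n::finite \<Rightarrow> real) \<Rightarrow> (real^'n \<Rightarrow> real^'d::finite) \<Rightarrow> real \<Rightarrow> real"
  where "mutual_info p f tn =
    (\<integral>x. p x * (\<integral>xm. pi_neg p f tn x xm * ln (pi_neg p f tn x xm / p xm) \<partial>lborel) \<partial>lborel)"

definition cost :: "real \<Rightarrow> real^'d::finite \<Rightarrow> real^'d \<Rightarrow> real"
  where "cost tau z1 z2 = - (z1 \<bullet> z2) / tau"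

definition L_CR :: "(real^'n::finite \<Rightarrow> real) \<Rightarrow> (real^'n \<Rightarrow> real^'d::finite) \<Rightarrow> real \<Rightarrow> real \<Rightarrow> real"
  where "L_CR p f tau tn =
    (\<integral>x. p x * (\<integral>xm. pi_neg p f tn x xm * (- cost tau (f x) (f xm)) \<partial>lborel) \<partial>lborel)"

definition L_uniform :: "(real^'n::finite \<Rightarrow> real) \<Rightarrow> (real^'n \<Rightarrow> real^'d::finite) \<Rightarrow> real \<Rightarrow> real"
  where "L_uniform p f tau =
    (\<integral>x. p x * ln (\<integral>xm. p xm * exp ((f xm \<bullet> f x) / tau) \<partial>lborel) \<partial>lborel)"

end

theory Submission
  imports Defs
begin

lemma int_pg:
  fixes p g :: "real^'n::finite \<Rightarrow> real"
  assumes "integrable lborel p" "\<And>y. p y \<ge> 0" "g \<in> borel_measurable lborel"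
    "\<And>y. \<bar>g y\<bar> \<le> B"
  shows "integrable lborel (\<lambda>y. p y * g y)"
proof (rule Bochner_Integration.integrable_bound[where f="\<lambda>y. B * p y"])
  show "integrable lborel (\<lambda>y. B * p y)" using assms(1) by simp
  show "(\<lambda>y. p y * g y) \<in> borel_measurable lborel"
    using assms(1,3) by measurable
  have "norm (p y * g y) \<le> norm (B * p y)" for y
  proof -
    have "norm (p y * g y) = p y * \<bar>g y\<bar>" using assms(2)[of y] by (simp add: abs_mult)
    also have "\<dots> \<le> p y * B" using assms(2)[of y] assms(4)[of y] by (simp add: mult_left_mono)
    also have "\<dots> \<le> norm (B * p y)" by (simp add: mult.commute)
    finally show ?thesis .
  qed
  then show "AE x in lborel. norm (p x * g x) \<le> norm (B * p x)" by simp
qed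

lemma int_pg_bnd:
  fixes p g :: "real^'n::finite \<Rightarrow> real"
  assumes "integrable lborel p" "\<And>y. p y \<ge> 0" "g \<in> borel_measurable lborel"
    "\<And>y. \<bar>g y\<bar> \<le> K" "(\<integral>y. p y \<partial>lborel) = 1"
    "\<And>y. a \<le> g y" "\<And>y. g y \<le> b"
  shows "a \<le> (\<integral>y. p y * g y \<partial>lborel)" "(\<integral>y. p y * g y \<partial>lborel) \<le> b"
proof -
  have i: "integrable lborel (\<lambda>y. p y * g y)" using int_pg[OF assms(1-4)] .
  have "(\<integral>y. p y * a \<partial>lborel) \<le> (\<integral>y. p y * g y \<partial>lborel)"
    using assms(1,2,6) i by (intro integral_mono) (auto intro: mult_left_mono)
  then show "a \<le> (\<integral>y. p y * g y \<partial>lborel)" using assms(5) by simp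
  have "(\<integral>y. p y * g y \<partial>lborel) \<le> (\<integral>y. p y * b \<partial>lborel)"
    using assms(1,2,7) i by (intro integral_mono) (auto intro: mult_left_mono)
  then show "(\<integral>y. p y * g y \<partial>lborel) \<le> b" using assms(5) by simp
qed

lemma int_pg_abs:
  fixes p g :: "real^'n::finite \<Rightarrow> real"
  assumes "integrable lborel p" "\<And>y. p y \<ge> 0" "g \<in> borel_measurable lborel"
    "\<And>y. \<bar>g y\<bar> \<le> K" "(\<integral>y. p y \<partial>lborel) = 1"
  shows "\<bar>\<integral>y. p y * g y \<partial>lborel\<bar> \<le> K"
proof -
  have lo: "- K \<le> g y" for y using assms(4)[of y] by linarith
  have hi: "g y \<le> K" for y using assms(4)[of y] by linarith
  from int_pg_bnd[OF assms lo hi] show ?thesis by auto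
qed

theorem lemma3:
  fixes p :: "real^'n::finite \<Rightarrow> real"
    and f :: "real^'n \<Rightarrow> real^'d::finite"
    and tau tn :: real
  assumes p_meas: "p \<in> borel_measurable lborel"
    and p_nonneg: "\<And>x. p x \<ge> 0"
    and p_int: "integrable lborel p"
    and p_total: "(\<integral>x. p x \<partial>lborel) = 1"
    and f_meas: "f \<in> borel_measurable lborel"
    and f_sphere: "\<And>x. norm (f x) = 1"
    and tau_pos: "tau > 0"
    and tn_pos: "tn > 0"
  shows "L_uniform p f tau + mutual_info p f tn \<ge> L_CR p f tau tn"
proof -
  note [measurable] = p_meas f_meas
  note P = p_int p_nonneg
  define e where "e x y = exp (- tn * (norm (f x - f y))\<^sup>2)" for x y
  define Z where "Z x = negZ p f tn x" for x
  define A where "A x = (\<integral>y. p y * exp ((f y \<bullet> f x) / tau) \<partial>lborel)" for x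
  define s where "s x y = (f x \<bullet> f y) / tau" for x y
  define M where "M x = (\<integral>y. p y * (e x y / Z x * (- tn * (norm (f x - f y))\<^sup>2 - ln (Z x))) \<partial>lborel)" for x
  define C where "C x = (\<integral>y. p y * (e x y / Z x * s x y) \<partial>lborel)" for x
  have e_meas[measurable]: "(\<lambda>y. e x y) \<in> borel_measurable lborel" for x unfolding e_def by measurable
  have Z_meas[measurable]: "Z \<in> borel_measurable lborel" unfolding Z_def negZ_def by measurable
  have ip: "\<bar>f x \<bullet> f y\<bar> \<le> 1" for x y using Cauchy_Schwarz_ineq2[of "f x" "f y"] f_sphere by simp
  have s_bnd: "\<bar>s x y\<bar> \<le> 1 / tau" for x y
    using ip[of x y] tau_pos unfolding s_def by (simp add: abs_div divide_right_mono)
  have d_bnd: "(norm (f x - f y))\<^sup>2 \<le> 4" for x y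
  proof -
    have "norm (f x - f y) \<le> 2" using norm_triangle_ineq4[of "f x" "f y"] f_sphere by simp
    then have "(norm (f x - f y))\<^sup>2 \<le> 2\<^sup>2" by (intro power_mono) auto
    then show ?thesis by simp
  qed
  have e_lo: "exp (- 4 * tn) \<le> e x y" for x y
    unfolding e_def using d_bnd[of x y] tn_pos by simp
  have e_hi: "e x y \<le> 1" for x y
    unfolding e_def using tn_pos by simp
  have e_pos: "e x y > 0" for x y unfolding e_def by simp
  have e_abs: "\<bar>e x y\<bar> \<le> 1" for x y using e_hi[of x y] e_pos[of x y] by simp
  have Z_eq: "Z x = (\<integral>y. p y * e x y \<partial>lborel)" for x
    unfolding Z_def negZ_def e_def by (simp add: mult.commute)
  have Z_lo: "exp (- 4 * tn) \<le> Z x" for x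
    unfolding Z_eq by (rule int_pg_bnd(1)[OF P e_meas e_abs p_total e_lo e_hi])
  have Z_hi: "Z x \<le> 1" for x
    unfolding Z_eq by (rule int_pg_bnd(2)[OF P e_meas e_abs p_total e_lo e_hi])
  have Z_pos: "Z x > 0" for x using Z_lo[of x] by (meson exp_gt_zero less_le_trans)
  have lnZ: "\<bar>ln (Z x)\<bar> \<le> 4 * tn" for x
  proof -
    have "ln (Z x) \<le> 0" using Z_hi[of x] Z_pos[of x] by simp
    moreover have "ln (exp (- 4 * tn)) \<le> ln (Z x)" using Z_lo[of x] Z_pos[of x] by (subst ln_le_cancel_iff) auto
    ultimately show ?thesis by simp
  qed
  have eZ: "\<bar>e x y / Z x\<bar> \<le> exp (4 * tn)" for x y
  proof -
    have "\<bar>e x y / Z x\<bar> = e x y / Z x" using e_pos[of x y] Z_pos[of x] by simp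
    also have "\<dots> \<le> 1 / exp (- 4 * tn)"
      using e_hi[of x y] Z_lo[of x] e_pos[of x y] by (intro frac_le) auto
    also have "\<dots> = exp (4 * tn)" by (simp add: exp_minus field_simps)
    finally show ?thesis .
  qed
  define KM where "KM = exp (4 * tn) * (8 * tn)"
  define KC where "KC = exp (4 * tn) * (1 / tau)"
  have gM_bnd: "\<bar>e x y / Z x * (- tn * (norm (f x - f y))\<^sup>2 - ln (Z x))\<bar> \<le> KM" for x y
  proof -
    have "\<bar>- tn * (norm (f x - f y))\<^sup>2 - ln (Z x)\<bar> \<le> 8 * tn"
    proof -
      have "tn * (norm (f x - f y))\<^sup>2 \<le> tn * 4" using d_bnd[of x y] tn_pos by (intro mult_left_mono) auto
      moreover have "0 \<le> tn * (norm (f x - f y))\<^sup>2" using tn_pos by simp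
      ultimately show ?thesis using lnZ[of x] tn_pos unfolding abs_le_iff by linarith
    qed
    then show ?thesis unfolding KM_def abs_mult using eZ[of x y]
      by (intro mult_mono) auto
  qed
  have gC_bnd: "\<bar>e x y / Z x * s x y\<bar> \<le> KC" for x y
    unfolding KC_def abs_mult using eZ[of x y] s_bnd[of x y] by (intro mult_mono) auto
  have gM_meas[measurable]: "(\<lambda>y. e x y / Z x * (- tn * (norm (f x - f y))\<^sup>2 - ln (Z x))) \<in> borel_measurable lborel" for x
    by measurable
  have gC_meas[measurable]: "(\<lambda>y. e x y / Z x * s x y) \<in> borel_measurable lborel" for x
    unfolding s_def by measurable
  have sA_meas[measurable]: "(\<lambda>y. exp ((f y \<bullet> f x) / tau)) \<in> borel_measurable lborel" for x
    by measurable
  have sA_lo: "exp (- 1 / tau) \<le> exp ((f y \<bullet> f x) / tau)" for x y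
  proof -
    have h: "\<bar>(f y \<bullet> f x) / tau\<bar> \<le> 1 / tau" using s_bnd[of y x] unfolding s_def .
    have "- (1 / tau) \<le> (f y \<bullet> f x) / tau" using h by linarith
    then show ?thesis by simp
  qed
  have sA_hi: "exp ((f y \<bullet> f x) / tau) \<le> exp (1 / tau)" for x y
  proof -
    have h: "\<bar>(f y \<bullet> f x) / tau\<bar> \<le> 1 / tau" using s_bnd[of y x] unfolding s_def .
    have "(f y \<bullet> f x) / tau \<le> 1 / tau" using h by linarith
    then show ?thesis by simp
  qed
  have sA_abs: "\<bar>exp ((f y \<bullet> f x) / tau)\<bar> \<le> exp (1 / tau)" for x y using sA_hi[of y x] by simp
  have A_lo: "exp (- 1 / tau) \<le> A x" for x
    unfolding A_def by (rule int_pg_bnd(1)[OF P sA_meas sA_abs p_total sA_lo sA_hi])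
  have A_hi: "A x \<le> exp (1 / tau)" for x
    unfolding A_def by (rule int_pg_bnd(2)[OF P sA_meas sA_abs p_total sA_lo sA_hi])
  have A_pos: "A x > 0" for x using A_lo[of x] by (meson exp_gt_zero less_le_trans)
  have lnA: "\<bar>ln (A x)\<bar> \<le> 1 / tau" for x
  proof -
    have "ln (A x) \<le> ln (exp (1 / tau))" using A_hi[of x] A_pos[of x] by (subst ln_le_cancel_iff) auto
    moreover have "ln (exp (- 1 / tau)) \<le> ln (A x)" using A_lo[of x] A_pos[of x] by (subst ln_le_cancel_iff) auto
    ultimately show ?thesis by (simp add: abs_le_iff)
  qed
  have Lu: "L_uniform p f tau = (\<integral>x. p x * ln (A x) \<partial>lborel)"
    unfolding L_uniform_def A_def ..
  have pi_eq: "pi_neg p f tn x y = p y * (e x y / Z x)" for x y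
    unfolding pi_neg_def e_def Z_def by simp
  have MI_inner: "pi_neg p f tn x y * ln (pi_neg p f tn x y / p y)
     = p y * (e x y / Z x * (- tn * (norm (f x - f y))\<^sup>2 - ln (Z x)))" for x y
  proof (cases "p y = 0")
    case True then show ?thesis unfolding pi_eq by simp
  next
    case False
    then have "pi_neg p f tn x y / p y = e x y / Z x" unfolding pi_eq by simp
    moreover have "ln (e x y / Z x) = - tn * (norm (f x - f y))\<^sup>2 - ln (Z x)"
      using e_pos[of x y] Z_pos[of x] by (simp add: ln_div e_def)
    ultimately show ?thesis unfolding pi_eq by simp
  qed
  have MI: "mutual_info p f tn = (\<integral>x. p x * M x \<partial>lborel)"
    unfolding mutual_info_def M_def MI_inner ..
  have CR: "L_CR p f tau tn = (\<integral>x. p x * C x \<partial>lborel)"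
  proof -
    have CR_inner: "pi_neg p f tn x y * (- cost tau (f x) (f y)) = p y * (e x y / Z x * s x y)" for x y
      unfolding pi_eq cost_def s_def by simp
    show ?thesis unfolding L_CR_def C_def CR_inner ..
  qed
  have key: "C x \<le> M x + ln (A x)" for x
  proof -
    define q where "q y = p y * (e x y / Z x)" for y
    have q_int: "integrable lborel q" unfolding q_def
      by (rule int_pg[OF P]) (use eZ in auto)
    have q_one: "(\<integral>y. q y \<partial>lborel) = 1"
    proof -
      have "(\<integral>y. q y \<partial>lborel) = (\<integral>y. p y * e x y / Z x \<partial>lborel)" unfolding q_def by simp
      also have "\<dots> = (\<integral>y. p y * e x y \<partial>lborel) / Z x" by simp
      also have "\<dots> = 1" using Z_pos[of x] Z_eq[of x] by simp
      finally show ?thesis .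
    qed
    have pA_one: "(\<integral>y. p y * exp ((f y \<bullet> f x) / tau) / A x \<partial>lborel) = 1"
      using A_pos[of x] unfolding A_def by simp
    have iC: "integrable lborel (\<lambda>y. p y * (e x y / Z x * s x y))"
      by (rule int_pg[OF P gC_meas gC_bnd])
    have iM: "integrable lborel (\<lambda>y. p y * (e x y / Z x * (- tn * (norm (f x - f y))\<^sup>2 - ln (Z x))))"
      by (rule int_pg[OF P gM_meas gM_bnd])
    have iA: "integrable lborel (\<lambda>y. p y * exp ((f y \<bullet> f x) / tau) / A x)"
      using int_pg[OF P sA_meas sA_abs] by simp
    have pw: "p y * (e x y / Z x * s x y) - p y * (e x y / Z x * (- tn * (norm (f x - f y))\<^sup>2 - ln (Z x)))
        - q y * ln (A x) \<le> p y * exp ((f y \<bullet> f x) / tau) / A x - q y" for y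
    proof (cases "p y = 0")
      case True then show ?thesis unfolding q_def by simp
    next
      case False
      then have py: "p y > 0" using p_nonneg[of y] by simp
      have qy: "q y > 0" unfolding q_def using py e_pos[of x y] Z_pos[of x] by simp
      define r where "r = exp (s x y) * Z x / (e x y * A x)"
      have rpos: "r > 0" unfolding r_def using e_pos[of x y] Z_pos[of x] A_pos[of x] by simp
      have lnr: "ln r = s x y + ln (Z x) + tn * (norm (f x - f y))\<^sup>2 - ln (A x)"
        unfolding r_def using e_pos[of x y] Z_pos[of x] A_pos[of x]
        by (simp add: ln_div ln_mult e_def)
      have h1: "q y * ln r \<le> q y * (r - 1)" using ln_le_minus_one[OF rpos] qy by (intro mult_left_mono) auto
      have h2: "q y * r = p y * exp ((f y \<bullet> f x) / tau) / A x"
        unfolding q_def r_def s_def using e_pos[of x y] Z_pos[of x] A_pos[of x]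
        by (simp add: inner_commute field_simps)
      have h3: "p y * (e x y / Z x * s x y) = q y * s x y" unfolding q_def by simp
      have h4: "p y * (e x y / Z x * (- tn * (norm (f x - f y))\<^sup>2 - ln (Z x)))
          = q y * (- tn * (norm (f x - f y))\<^sup>2 - ln (Z x))" unfolding q_def by simp
      have h5: "q y * ln r = q y * s x y + q y * ln (Z x) + q y * (tn * (norm (f x - f y))\<^sup>2) - q y * ln (A x)"
        unfolding lnr by (simp add: algebra_simps)
      have h6: "q y * (- tn * (norm (f x - f y))\<^sup>2 - ln (Z x)) = - (q y * (tn * (norm (f x - f y))\<^sup>2)) - q y * ln (Z x)"
        by (simp add: algebra_simps)
      have h7: "q y * (r - 1) = q y * r - q y" by (simp add: algebra_simps)
      show ?thesis unfolding h3 h4 h6 using h1 h2 h5 h7 by linarith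
    qed
    have "(\<integral>y. p y * (e x y / Z x * s x y) - p y * (e x y / Z x * (- tn * (norm (f x - f y))\<^sup>2 - ln (Z x)))
        - q y * ln (A x) \<partial>lborel) \<le> (\<integral>y. p y * exp ((f y \<bullet> f x) / tau) / A x - q y \<partial>lborel)"
      using iC iM iA q_int pw by (intro integral_mono) auto
    then have "C x - M x - ln (A x) \<le> 1 - 1"
      using iC iM iA q_int q_one pA_one unfolding C_def M_def by (simp add: integral_diff)
    then show ?thesis by simp
  qed
  have lnA_meas[measurable]: "(\<lambda>x. ln (A x)) \<in> borel_measurable lborel" unfolding A_def by measurable
  have M_meas[measurable]: "M \<in> borel_measurable lborel" unfolding M_def e_def by measurable
  have C_meas[measurable]: "C \<in> borel_measurable lborel" unfolding C_def e_def s_def by measurable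
  have M_bnd: "\<bar>M x\<bar> \<le> KM" for x unfolding M_def by (rule int_pg_abs[OF P gM_meas gM_bnd p_total])
  have C_bnd: "\<bar>C x\<bar> \<le> KC" for x unfolding C_def by (rule int_pg_abs[OF P gC_meas gC_bnd p_total])
  have iU: "integrable lborel (\<lambda>x. p x * ln (A x))" by (rule int_pg[OF P lnA_meas lnA])
  have iMo: "integrable lborel (\<lambda>x. p x * M x)" by (rule int_pg[OF P M_meas M_bnd])
  have iCo: "integrable lborel (\<lambda>x. p x * C x)" by (rule int_pg[OF P C_meas C_bnd])
  have "(\<integral>x. p x * C x \<partial>lborel) \<le> (\<integral>x. p x * ln (A x) + p x * M x \<partial>lborel)"
  proof (rule integral_mono[OF iCo Bochner_Integration.integrable_add[OF iU iMo]])
    fix x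
    have "p x * C x \<le> p x * (M x + ln (A x))" by (rule mult_left_mono[OF key p_nonneg])
    then show "p x * C x \<le> p x * ln (A x) + p x * M x" by (simp add: algebra_simps)
  qed
  also have "\<dots> = (\<integral>x. p x * ln (A x) \<partial>lborel) + (\<integral>x. p x * M x \<partial>lborel)"
    using iU iMo by simp
  finally show ?thesis unfolding Lu MI CR by simp
qed

end
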